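(* For every $\pi\in\Pi$, $x\in S$, $\alpha\in(0,1]$ and $\gamma\ge 1$, $$\mathrm{CVaR}^\pi_{\alpha,x}\Big(\max_{t=0,1,\dots,T} g_K(X_t)\Big) \le \frac{1}{\gamma}\log\Big(\frac{1}{\alpha}E_x^\pi\Big(\sum_{t=0}^T e^{\gamma g_K(X_t)}\Big)\Big).$$
   Context: Setting: $S$, $A$, $W$ are Borel spaces (states, controls, disturbances), $T\in\mathbb{N}$. The sample space is $\Omega = (S\times A)^T\times S$ with its Borel $\sigma$-algebra $\mathcal{B}(\Omega)$; for $\omega=(x_0,u_0,\dots,x_{T-1},u_{T-1},x_T)$, $X_t(\omega)=x_t$ and $U_t(\omega)=u_t$. A Borel-measurable map $f:S\times A\times W\to S$ and a probability distribution $P_D$ on $W$ define the transition kernel $Q(B\mid x,u) = P_D(\{d\in W: f(x,u,d)\in B\})$ for $B\in\mathcal{B}(S)$. $\Pi$ is the set of randomized history-dependent policies $\pi=(\pi_0,\dots,\pi_{T-1})$, each $\pi_t$ a Borel-measurable stochastic kernel on $A$ given $H^t=(S\times A)^t\times S$. For $x\in S$, $\pi\in\Pi$, $P_x^\pi$ is the unique probability measure on $(\Omega,\mathcal{B}(\Omega))$ (Ionescu-Tulcea) under which $X_0=x$, $U_t$ is distributed according to $\pi_t(\cdot\mid X_0,U_0,\dots,X_t)$, and $X_{t+1}$ is distributed according to $Q(\cdot\mid X_t,U_t)$; $E_x^\pi$ denotes expectation under $P_x^\pi$. A constraint set $K\in\mathcal{B}(S)$ and a bounded Borel-measurable $g_K:S\to\mathbb{R}$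 are given. For a probability space $(\Omega,\mathcal{F},\mu)$, $Y\in L^1$ and $\alpha\in(0,1]$, $\mathrm{CVaR}_\alpha(Y) := \inf_{s\in\mathbb{R}}\big(s + \tfrac{1}{\alpha}E(\max(Y-s,0))\big)$. $\mathrm{CVaR}^\pi_{\alpha,x}$ denotes CVaR computed with respect to $P_x^\pi$. *)

theory Defs
  imports "HOL-Probability.Probability"
begin

text \<open>Sample space \<Omega> = (S \<times> A)^T \<times> S, represented (isomorphically) as pairs
  (xs, us) of extensional functions: xs on {..T} (states), us on {..<T} (controls).\<close>

definition hist_space :: "nat \<Rightarrow> ((nat \<Rightarrow> 's::topological_space) \<times> (nat \<Rightarrow> 'a::topological_space)) measure" where
  "hist_space t = (PiM {..t} (\<lambda>_. borel)) \<Otimes>\<^sub>M (PiM {..<t} (\<lambda>_. borel))"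

definition Xc :: "nat \<Rightarrow> (nat \<Rightarrow> 's) \<times> (nat \<Rightarrow> 'a) \<Rightarrow> 's" where
  "Xc t \<omega> = fst \<omega> t"

definition Uc :: "nat \<Rightarrow> (nat \<Rightarrow> 's) \<times> (nat \<Rightarrow> 'a) \<Rightarrow> 'a" where
  "Uc t \<omega> = snd \<omega> t"

definition trans_kernel :: "('s \<times> 'a \<times> 'w \<Rightarrow> 's::topological_space) \<Rightarrow> 'w measure \<Rightarrow> 's \<Rightarrow> 'a \<Rightarrow> 's measure" where
  "trans_kernel f PD x u = distr PD borel (\<lambda>d. f (x, u, d))"

definition is_policy :: "nat \<Rightarrow> (nat \<Rightarrow> (nat \<Rightarrow> 's::topological_space) \<times> (nat \<Rightarrow> 'a::topological_space) \<Rightarrow> 'a measure) \<Rightarrow> bool" where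
  "is_policy T \<pi> \<longleftrightarrow> (\<forall>t<T. \<pi> t \<in> hist_space t \<rightarrow>\<^sub>M prob_algebra borel)"

text \<open>Law of the partial trajectory (X_0,U_0,...,X_t) under initial state x and policy pi
  (Ionescu-Tulcea construction for finite horizon, via the Giry monad).\<close>
fun traj_measure :: "('s \<times> 'a \<times> 'w \<Rightarrow> 's::topological_space) \<Rightarrow> 'w measure \<Rightarrow> 's \<Rightarrow>
     (nat \<Rightarrow> (nat \<Rightarrow> 's) \<times> (nat \<Rightarrow> 'a::topological_space) \<Rightarrow> 'a measure) \<Rightarrow> nat \<Rightarrow>
     ((nat \<Rightarrow> 's) \<times> (nat \<Rightarrow> 'a)) measure" where
  "traj_measure f PD x \<pi> 0 = return (hist_space 0) ((\<lambda>i\<in>{..0}. x), (\<lambda>i\<in>{..<0}. undefined))"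
| "traj_measure f PD x \<pi> (Suc t) =
     traj_measure f PD x \<pi> t \<bind> (\<lambda>\<omega>.
       \<pi> t \<omega> \<bind> (\<lambda>u.
         trans_kernel f PD (fst \<omega> t) u \<bind> (\<lambda>y.
           return (hist_space (Suc t)) ((fst \<omega>)(Suc t := y), (snd \<omega>)(t := u)))))"

definition path_measure :: "nat \<Rightarrow> ('s \<times> 'a \<times> 'w \<Rightarrow> 's::topological_space) \<Rightarrow> 'w measure \<Rightarrow> 's \<Rightarrow>
     (nat \<Rightarrow> (nat \<Rightarrow> 's) \<times> (nat \<Rightarrow> 'a::topological_space) \<Rightarrow> 'a measure) \<Rightarrow>
     ((nat \<Rightarrow> 's) \<times> (nat \<Rightarrow> 'a)) measure" where
  "path_measure T f PD x \<pi> = traj_measure f PD x \<pi> T"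

definition CVaR :: "'b measure \<Rightarrow> real \<Rightarrow> ('b \<Rightarrow> real) \<Rightarrow> real" where
  "CVaR M \<alpha> Y = (INF s::real. s + (1 / \<alpha>) * (\<integral>\<omega>. max (Y \<omega> - s) 0 \<partial>M))"

end

theory Submission imports Defs begin

lemma space_hist: "space (hist_space t) = (\<Pi>\<^sub>E i\<in>{..t}. UNIV) \<times> (\<Pi>\<^sub>E i\<in>{..<t}. UNIV)"
  by (simp add: hist_space_def space_pair_measure space_PiM)

lemma meas_Xh: "t \<le> T \<Longrightarrow> (\<lambda>\<omega>. fst \<omega> t) \<in> hist_space T \<rightarrow>\<^sub>M borel"
  unfolding hist_space_def
  by (rule measurable_compose[OF measurable_fst measurable_component_singleton]) auto

lemma meas_upd:
  "(\<lambda>z::(((nat\<Rightarrow>'s::topological_space)\<times>(nat\<Rightarrow>'a::topological_space))\<times>'a)\<times>'s. ((fst (fst (fst z)))(Suc t := snd z), (snd (fst (fst z)))(t := snd (fst z))))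
     \<in> (hist_space t \<Otimes>\<^sub>M borel) \<Otimes>\<^sub>M borel
       \<rightarrow>\<^sub>M hist_space (Suc t)"
proof -
  have A: "(\<lambda>z::(((nat\<Rightarrow>'s)\<times>(nat\<Rightarrow>'a))\<times>'a)\<times>'s. (fst (fst (fst z)))(Suc t := snd z))
     \<in> (hist_space t \<Otimes>\<^sub>M borel) \<Otimes>\<^sub>M borel \<rightarrow>\<^sub>M PiM {..Suc t} (\<lambda>_. borel)"
  proof (rule measurable_PiM_single')
    fix i assume i: "i \<in> {..Suc t}"
    show "(\<lambda>z::(((nat\<Rightarrow>'s)\<times>(nat\<Rightarrow>'a))\<times>'a)\<times>'s. ((fst (fst (fst z)))(Suc t := snd z)) i) \<in> (hist_space t \<Otimes>\<^sub>M borel) \<Otimes>\<^sub>M borel \<rightarrow>\<^sub>M borel"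
    proof (cases "i = Suc t")
      case True then show ?thesis by simp
    next
      case False
      then have "i \<in> {..t}" using i by auto
      then have "(\<lambda>z::(((nat\<Rightarrow>'s)\<times>(nat\<Rightarrow>'a))\<times>'a)\<times>'s. fst (fst (fst z)) i) \<in> (hist_space t \<Otimes>\<^sub>M borel) \<Otimes>\<^sub>M (borel::'s measure) \<rightarrow>\<^sub>M borel"
        unfolding hist_space_def by measurable
      then show ?thesis using False by simp
    qed
  next
    show "(\<lambda>z::(((nat\<Rightarrow>'s)\<times>(nat\<Rightarrow>'a))\<times>'a)\<times>'s. \<lambda>i. ((fst (fst (fst z)))(Suc t := snd z)) i) \<in> space ((hist_space t \<Otimes>\<^sub>M borel) \<Otimes>\<^sub>M borel) \<rightarrow> (\<Pi>\<^sub>E i\<in>{..Suc t}. space borel)"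
      by (auto simp: space_pair_measure space_hist PiE_def extensional_def)
  qed
  have B: "(\<lambda>z::(((nat\<Rightarrow>'s)\<times>(nat\<Rightarrow>'a))\<times>'a)\<times>'s. (snd (fst (fst z)))(t := snd (fst z)))
     \<in> (hist_space t \<Otimes>\<^sub>M borel) \<Otimes>\<^sub>M borel \<rightarrow>\<^sub>M PiM {..<Suc t} (\<lambda>_. borel)"
  proof (rule measurable_PiM_single')
    fix i assume i: "i \<in> {..<Suc t}"
    show "(\<lambda>z::(((nat\<Rightarrow>'s)\<times>(nat\<Rightarrow>'a))\<times>'a)\<times>'s. ((snd (fst (fst z)))(t := snd (fst z))) i) \<in> (hist_space t \<Otimes>\<^sub>M borel) \<Otimes>\<^sub>M borel \<rightarrow>\<^sub>M borel"
    proof (cases "i = t")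
      case True then show ?thesis by simp
    next
      case False
      then have "i \<in> {..<t}" using i by auto
      then have "(\<lambda>z::(((nat\<Rightarrow>'s)\<times>(nat\<Rightarrow>'a))\<times>'a)\<times>'s. snd (fst (fst z)) i) \<in> (hist_space t \<Otimes>\<^sub>M (borel::'a measure)) \<Otimes>\<^sub>M (borel::'s measure) \<rightarrow>\<^sub>M borel"
        unfolding hist_space_def by measurable
      then show ?thesis using False by simp
    qed
  next
    show "(\<lambda>z::(((nat\<Rightarrow>'s)\<times>(nat\<Rightarrow>'a))\<times>'a)\<times>'s. \<lambda>i. ((snd (fst (fst z)))(t := snd (fst z))) i) \<in> space ((hist_space t \<Otimes>\<^sub>M borel) \<Otimes>\<^sub>M borel) \<rightarrow> (\<Pi>\<^sub>E i\<in>{..<Suc t}. space borel)"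
      by (auto simp: space_pair_measure space_hist PiE_def extensional_def)
  qed
  have "(\<lambda>z. ((fst (fst (fst z)))(Suc t := snd z), (snd (fst (fst z)))(t := snd (fst z))))
     \<in> (hist_space t \<Otimes>\<^sub>M (borel::'a measure)) \<Otimes>\<^sub>M (borel::'s measure) \<rightarrow>\<^sub>M hist_space (Suc t)"
    unfolding hist_space_def[of "Suc t"] using A B by (rule measurable_Pair)
  then show ?thesis .
qed

lemma kernel_meas:
  fixes f :: "'s::topological_space \<times> 'a::topological_space \<times> 'w::topological_space \<Rightarrow> 's"
  assumes f_meas: "f \<in> (borel \<Otimes>\<^sub>M borel \<Otimes>\<^sub>M borel) \<rightarrow>\<^sub>M borel"
    and PD: "prob_space PD" "sets PD = sets borel"
    and pit: "\<pi> t \<in> hist_space t \<rightarrow>\<^sub>M prob_algebra borel"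
  shows "(\<lambda>\<omega>. \<pi> t \<omega> \<bind> (\<lambda>u. trans_kernel f PD (fst \<omega> t) u \<bind> (\<lambda>y.
           return (hist_space (Suc t)) ((fst \<omega>)(Suc t := y), (snd \<omega>)(t := u)))))
     \<in> hist_space t \<rightarrow>\<^sub>M prob_algebra (hist_space (Suc t))"
proof -
  have PDa: "PD \<in> space (prob_algebra PD)" using PD by (simp add: space_prob_algebra)
  have fm: "(\<lambda>(z::((nat\<Rightarrow>'s)\<times>(nat\<Rightarrow>'a))\<times>'a, d). f (fst (fst z) t, snd z, d)) \<in> (hist_space t \<Otimes>\<^sub>M borel) \<Otimes>\<^sub>M PD \<rightarrow>\<^sub>M borel"
  proof -
    have "(\<lambda>(z::((nat\<Rightarrow>'s)\<times>(nat\<Rightarrow>'a))\<times>'a, d::'w). f (fst (fst z) t, snd z, d)) \<in> (hist_space t \<Otimes>\<^sub>M borel) \<Otimes>\<^sub>M borel \<rightarrow>\<^sub>M borel"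
      using f_meas unfolding hist_space_def by measurable
    then show ?thesis
      by (simp only: measurable_cong_sets[OF sets_pair_measure_cong[OF refl PD(2)] refl])
  qed
  have Q: "(\<lambda>z::((nat\<Rightarrow>'s)\<times>(nat\<Rightarrow>'a))\<times>'a. trans_kernel f PD (fst (fst z) t) (snd z)) \<in> hist_space t \<Otimes>\<^sub>M borel \<rightarrow>\<^sub>M prob_algebra borel"
    unfolding trans_kernel_def
    by (rule measurable_distr_prob_space2[OF measurable_const[OF PDa] fm])
  have R: "(\<lambda>(z::((nat\<Rightarrow>'s)\<times>(nat\<Rightarrow>'a))\<times>'a, y). return (hist_space (Suc t)) ((fst (fst z))(Suc t := y), (snd (fst z))(t := snd z)))
     \<in> (hist_space t \<Otimes>\<^sub>M borel) \<Otimes>\<^sub>M borel \<rightarrow>\<^sub>M prob_algebra (hist_space (Suc t))"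
    using measurable_compose[OF meas_upd measurable_return_prob_space]
    by (simp add: case_prod_beta')
  have I: "(\<lambda>z::((nat\<Rightarrow>'s)\<times>(nat\<Rightarrow>'a))\<times>'a. trans_kernel f PD (fst (fst z) t) (snd z) \<bind> (\<lambda>y. return (hist_space (Suc t)) ((fst (fst z))(Suc t := y), (snd (fst z))(t := snd z))))
     \<in> hist_space t \<Otimes>\<^sub>M borel \<rightarrow>\<^sub>M prob_algebra (hist_space (Suc t))"
    by (rule measurable_bind_prob_space2[OF Q R])
  have I': "(\<lambda>(\<omega>, u). trans_kernel f PD (fst \<omega> t) u \<bind> (\<lambda>y. return (hist_space (Suc t)) ((fst \<omega>)(Suc t := y), (snd \<omega>)(t := u))))
     \<in> hist_space t \<Otimes>\<^sub>M borel \<rightarrow>\<^sub>M prob_algebra (hist_space (Suc t))"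
    using I by (simp add: case_prod_beta')
  show ?thesis by (rule measurable_bind_prob_space2[OF pit I'])
qed

lemma traj_space:
  fixes f :: "'s::topological_space \<times> 'a::topological_space \<times> 'w::topological_space \<Rightarrow> 's"
  assumes f_meas: "f \<in> (borel \<Otimes>\<^sub>M borel \<Otimes>\<^sub>M borel) \<rightarrow>\<^sub>M borel"
    and PD: "prob_space PD" "sets PD = sets borel"
    and pol: "is_policy T \<pi>"
  shows "t \<le> T \<Longrightarrow> traj_measure f PD x \<pi> t \<in> space (prob_algebra (hist_space t))"
proof (induction t)
  case 0
  have "((\<lambda>i\<in>{..0}. x), (\<lambda>i\<in>{..<0::nat}. undefined)) \<in> space (hist_space 0)"
    by (simp add: space_hist)
  then show ?case using measurable_space[OF measurable_return_prob_space] by simp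
next
  case (Suc t)
  then have tT: "t < T" "t \<le> T" by auto
  have pit: "\<pi> t \<in> hist_space t \<rightarrow>\<^sub>M prob_algebra borel" using pol tT unfolding is_policy_def by auto
  note K = kernel_meas[of f PD \<pi> t, OF f_meas PD(1) PD(2) pit]
  have A: "traj_measure f PD x \<pi> t \<in> space (prob_algebra (hist_space t))" using Suc tT by auto
  show ?case
    using prob_space_bind'[OF A K] sets_bind'[OF A K] by (simp add: space_prob_algebra)
qed

theorem theorem1:
  fixes T :: nat
    and f :: "'s::polish_space \<times> 'a::polish_space \<times> 'w::polish_space \<Rightarrow> 's"
    and PD :: "'w measure"
    and K :: "'s set"
    and gK :: "'s \<Rightarrow> real"
    and \<pi> :: "nat \<Rightarrow> (nat \<Rightarrow> 's) \<times> (nat \<Rightarrow> 'a) \<Rightarrow> 'a measure"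
    and x :: 's
    and \<alpha> \<gamma> :: real
  assumes f_meas: "f \<in> (borel \<Otimes>\<^sub>M borel \<Otimes>\<^sub>M borel) \<rightarrow>\<^sub>M borel"
    and PD: "prob_space PD" "sets PD = sets borel"
    and K: "K \<in> sets borel"
    and g_meas: "gK \<in> borel_measurable borel"
    and g_bdd: "bounded (range gK)"
    and pol: "is_policy T \<pi>"
    and \<alpha>: "0 < \<alpha>" "\<alpha> \<le> 1"
    and \<gamma>: "1 \<le> \<gamma>"
  shows "CVaR (path_measure T f PD x \<pi>) \<alpha> (\<lambda>\<omega>. Max ((\<lambda>t. gK (Xc t \<omega>)) ` {..T}))
           \<le> (1 / \<gamma>) * ln ((1 / \<alpha>) *
               (\<integral>\<omega>. (\<Sum>t\<le>T. exp (\<gamma> * gK (Xc t \<omega>))) \<partial>(path_measure T f PD x \<pi>)))"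
proof -
  define M where "M = path_measure T f PD x \<pi>"
  have MA: "M \<in> space (prob_algebra (hist_space T))"
    unfolding M_def path_measure_def by (rule traj_space[OF f_meas PD(1) PD(2) pol]) simp
  then have Mp: "prob_space M" and Ms: "sets M = sets (hist_space T)"
    by (auto simp: space_prob_algebra)
  interpret P: prob_space M by (rule Mp)
  have Xm: "(\<lambda>\<omega>. gK (Xc t \<omega>)) \<in> borel_measurable M" if "t \<le> T" for t
  proof -
    have "(\<lambda>\<omega>. fst \<omega> t) \<in> borel_measurable M"
      using meas_Xh[OF that] by (simp add: measurable_cong_sets[OF Ms refl])
    then show ?thesis unfolding Xc_def using g_meas by measurable
  qed
  from g_bdd obtain B where B: "\<And>y. \<bar>gK y\<bar> \<le> B"
    unfolding bounded_iff by auto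
  define Y where "Y \<omega> = Max ((\<lambda>t. gK (Xc t \<omega>)) ` {..T})" for \<omega> :: "(nat \<Rightarrow> 's) \<times> (nat \<Rightarrow> 'a)"
  define Z where "Z \<omega> = (\<Sum>t\<le>T. exp (\<gamma> * gK (Xc t \<omega>)))" for \<omega> :: "(nat \<Rightarrow> 's) \<times> (nat \<Rightarrow> 'a)"
  have gpos: "0 < \<gamma>" using \<gamma> by simp
  have Ym: "Y \<in> borel_measurable M"
    unfolding Y_def by (rule borel_measurable_Max) (auto intro: Xm)
  have Zm: "Z \<in> borel_measurable M"
    unfolding Z_def using Xm by (intro borel_measurable_sum borel_measurable_exp borel_measurable_times) auto
  have Yex: "\<exists>t\<le>T. Y \<omega> = gK (Xc t \<omega>)" for \<omega>
  proof -
    have "Y \<omega> \<in> (\<lambda>t. gK (Xc t \<omega>)) ` {..T}" unfolding Y_def by (rule Max_in) auto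
    then show ?thesis by auto
  qed
  have Yb: "\<bar>Y \<omega>\<bar> \<le> B" for \<omega> using Yex[of \<omega>] B by auto
  have YZ: "exp (\<gamma> * Y \<omega>) \<le> Z \<omega>" for \<omega>
  proof -
    obtain t where t: "t \<le> T" "Y \<omega> = gK (Xc t \<omega>)" using Yex by blast
    have "exp (\<gamma> * gK (Xc t \<omega>)) \<le> Z \<omega>"
      unfolding Z_def by (rule member_le_sum) (use t in auto)
    then show ?thesis using t by simp
  qed
  have Zb: "\<bar>Z \<omega>\<bar> \<le> (\<Sum>t\<le>T. exp (\<gamma> * B))" for \<omega>
  proof -
    have "\<bar>Z \<omega>\<bar> = Z \<omega>" unfolding Z_def by (intro abs_of_nonneg sum_nonneg) auto
    also have "\<dots> \<le> (\<Sum>t\<le>T. exp (\<gamma> * B))"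
      unfolding Z_def using B gpos by (intro sum_mono) (auto simp: abs_le_iff)
    finally show ?thesis .
  qed
  have Zi: "integrable M Z"
    by (rule P.integrable_const_bound[where B="\<Sum>t\<le>T. exp (\<gamma> * B)"]) (use Zb Zm in auto)
  have maxi: "integrable M (\<lambda>\<omega>. max (Y \<omega> - s) 0)" for s
  proof (rule P.integrable_const_bound[where B="B + \<bar>s\<bar>"])
    show "AE \<omega> in M. norm (max (Y \<omega> - s) 0) \<le> B + \<bar>s\<bar>"
    proof (intro AE_I2)
      fix \<omega> have "\<bar>Y \<omega>\<bar> \<le> B" by (rule Yb)
      then show "norm (max (Y \<omega> - s) 0) \<le> B + \<bar>s\<bar>" by (auto simp: abs_le_iff)
    qed
    show "(\<lambda>\<omega>. max (Y \<omega> - s) 0) \<in> borel_measurable M" using Ym by measurable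
  qed
  define E where "E = (\<integral>\<omega>. Z \<omega> \<partial>M)"
  have "(\<integral>\<omega>. exp (- \<gamma> * B) \<partial>M) \<le> E"
    unfolding E_def
  proof (rule integral_mono[OF _ Zi])
    show "exp (- \<gamma> * B) \<le> Z \<omega>" for \<omega>
    proof -
      have "-B \<le> Y \<omega>" using Yb[of \<omega>] by (simp add: abs_le_iff)
      then have "\<gamma> * (-B) \<le> \<gamma> * Y \<omega>" using gpos by (intro mult_left_mono) auto
      then have "exp (- \<gamma> * B) \<le> exp (\<gamma> * Y \<omega>)" by simp
      then show ?thesis using YZ[of \<omega>] by linarith
    qed
  qed simp
  moreover have "(\<integral>\<omega>. exp (- \<gamma> * B) \<partial>M) = exp (- \<gamma> * B)" by (simp add: P.prob_space)
  ultimately have Epos: "0 < E" by (metis exp_gt_zero less_le_trans)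
  define h where "h s = s + (1 / \<alpha>) * (\<integral>\<omega>. max (Y \<omega> - s) 0 \<partial>M)" for s
  have hlow: "- B \<le> h s" for s
  proof -
    define I where "I = (\<integral>\<omega>. max (Y \<omega> - s) 0 \<partial>M)"
    have I0: "0 \<le> I" unfolding I_def by (rule integral_nonneg_AE) auto
    have pwl: "- B - s \<le> max (Y \<omega> - s) 0" for \<omega>
    proof -
      have "\<bar>Y \<omega>\<bar> \<le> B" by (rule Yb)
      then show ?thesis by (simp add: abs_le_iff le_max_iff_disj)
    qed
    have "(\<integral>\<omega>. (- B - s) \<partial>M) \<le> I" unfolding I_def
      by (rule integral_mono[OF _ maxi]) (auto intro: pwl)
    then have I1: "- B - s \<le> I" by (simp add: P.prob_space)
    have "1 * I \<le> (1 / \<alpha>) * I" using I0 \<alpha> by (intro mult_right_mono) auto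
    then have "I \<le> (1 / \<alpha>) * I" by simp
    then show ?thesis unfolding h_def I_def[symmetric] using I1 by linarith
  qed
  have bdd: "bdd_below (range h)" using hlow by (intro bdd_belowI2) auto
  define s0 where "s0 = (ln (E / \<alpha>) - 1) / \<gamma>"
  have es0: "exp (- \<gamma> * s0 - 1) = \<alpha> / E"
  proof -
    have "- \<gamma> * s0 - 1 = - ln (E / \<alpha>)" unfolding s0_def using gpos by (simp add: field_simps)
    then show ?thesis using Epos \<alpha> by (simp add: exp_minus)
  qed
  have pw: "max (Y \<omega> - s0) 0 \<le> (exp (- \<gamma> * s0 - 1) / \<gamma>) * Z \<omega>" for \<omega>
  proof -
    define y where "y = Y \<omega> - s0"
    have "\<gamma> * y \<le> exp (\<gamma> * y - 1)" using exp_ge_add_one_self[of "\<gamma> * y - 1"] by simp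
    then have "max y 0 \<le> exp (\<gamma> * y - 1) / \<gamma>"
    proof (cases "y \<le> 0")
      case True then show ?thesis using gpos by (simp add: max_def)
    next
      case False
      then have "y \<le> exp (\<gamma> * y - 1) / \<gamma>" using \<open>\<gamma> * y \<le> exp (\<gamma> * y - 1)\<close> gpos
        by (simp add: pos_le_divide_eq mult.commute)
      then show ?thesis using False by (simp add: max_def)
    qed
    also have "exp (\<gamma> * y - 1) = exp (\<gamma> * Y \<omega>) * exp (- \<gamma> * s0 - 1)"
    proof -
      have "\<gamma> * y - 1 = \<gamma> * Y \<omega> + (- \<gamma> * s0 - 1)" unfolding y_def by (simp add: algebra_simps)
      then show ?thesis by (simp only: exp_add)
    qed
    also have "\<dots> \<le> Z \<omega> * exp (- \<gamma> * s0 - 1)" using YZ[of \<omega>] by simp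
    finally show ?thesis using gpos by (simp add: y_def field_simps)
  qed
  have "(\<integral>\<omega>. max (Y \<omega> - s0) 0 \<partial>M) \<le> (\<integral>\<omega>. (exp (- \<gamma> * s0 - 1) / \<gamma>) * Z \<omega> \<partial>M)"
    by (rule integral_mono[OF maxi]) (use Zi pw in auto)
  also have "\<dots> = (exp (- \<gamma> * s0 - 1) / \<gamma>) * E" unfolding E_def by simp
  also have "\<dots> = (\<alpha> / E / \<gamma>) * E" by (simp only: es0)
  also have "\<dots> = \<alpha> / \<gamma>" using Epos by simp
  finally have "h s0 \<le> s0 + (1 / \<alpha>) * (\<alpha> / \<gamma>)" unfolding h_def using \<alpha>
    by (intro add_left_mono mult_left_mono) auto
  also have "\<dots> = (1 / \<gamma>) * ln ((1 / \<alpha>) * E)"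
    unfolding s0_def using \<alpha> gpos by (simp add: field_simps)
  finally have hs0: "h s0 \<le> (1 / \<gamma>) * ln ((1 / \<alpha>) * E)" .
  have "CVaR M \<alpha> Y \<le> h s0"
    unfolding CVaR_def h_def[symmetric] by (rule cINF_lower[OF bdd]) simp
  then show ?thesis using hs0 unfolding M_def[symmetric] E_def Y_def Z_def by (rule order_trans)
qed

end
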